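(* Let $T$ (failure time) and $C$ (censoring time) be random times with true CDFs $F^\star$ and $G^\star$, possibly conditional on features $X$, satisfying random censoring $T \perp C \mid X$, and observed only through $(X, U, \Delta)$ with $U=\min(T,C)$ and $\Delta=\mathbf{1}\{T\le C\}$. Let $\{F_{\theta_T}:\theta_T\in\Theta_T\}$ and $\{G_{\theta_C}:\theta_C\in\Theta_C\}$ be differentiable parametric model families for the failure and censoring distributions, and assume there exist $\theta_T^\star\in\Theta_T$ and $\theta_C^\star\in\Theta_C$ with $F^\star=F_{\theta_T^\star}$ and $G^\star=G_{\theta_C^\star}$. Let $L$ be a proper loss, and let $L_I$ be its inverse-probability-of-censoring-weighted (IPCW) form, i.e. a functional computed from the observed data $(X,U,\Delta)$ such that $L_I(F_{\theta_T};G^\star)=L(F_{\theta_T})$ and $L_I(G_{\theta_C};F^\star)=L(G_{\theta_C})$ for all $\theta_T,\theta_C$. Define the two player losses $$\ell_F(\theta)=L_I(F_{\theta_T};G_{\theta_C}),\qquad \ell_G(\theta)=L_I(G_{\theta_C};F_{\theta_T}),\qquad \theta=(\theta_T,\theta_C),$$ where the failure player controls $\theta_T$ and minimizes $\ell_F$, and the censor player controls $\theta_C$ and minimizes $\ell_G$. Assume the losses are only computed at times for which the positivity conditions hold. Then $(\theta_T^\star,\theta_C^\star)$ is a stationary point of this game, i.e. $\nabla_{\theta_T}\ell_F(\theta_T^\star,\theta_C^\star)=0$ and $\nabla_{\theta_C}\ell_G(\theta_T^\star,\theta_C^\star)=0$.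
   Context: A loss $L$ on distributions is proper if it is minimized at the true data-generating distribution. Notation: $\overline{F}=1-F$, $\overline{G}=1-G$, $\overline{G}(t^-)=P(C\ge t)$. Positivity conditions: there is a truncation time $t_{\max}$ and $\epsilon>0$ such that for all $x$ and all $t\le t_{\max}$ with $f(t\mid x)>0$ (failure density/mass), $\overline{G}(t^-\mid x)\ge\epsilon$; and symmetrically, for all $x$ and all $t\le t_{\max}$ with $g(t\mid x)>0$ (censoring density/mass), $\overline{F}(t\mid x)\ge \epsilon$. A stationary point of a differentiable game is a parameter at which the simultaneous gradient $\xi(\theta)=(\nabla_{\theta_T}\ell_F,\nabla_{\theta_C}\ell_G)$ vanishes. Example of such a game (IPCW Brier score at time $t$): $\ell_F^t=\mathbb{E}\big[\overline{F}_{\theta_T}(t)^2\Delta\mathbf{1}\{U\le t\}/\overline{G}_{\theta_C}(U^-)+F_{\theta_T}(t)^2\mathbf{1}\{U>t\}/\overline{G}_{\theta_C}(t)\big]$ and $\ell_G^t=\mathbb{E}\big[\overline{G}_{\theta_C}(t)^2(1-\Delta)\mathbf{1}\{U\le t\}/\overline{F}_{\theta_T}(U)+G_{\theta_C}(t)^2\mathbf{1}\{U>t\}/\overline{F}_{\theta_T}(t)\big]$; the result applies to single-time games, summed games over several times, and multi-player games with one failure and one censor player per time. *)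

theory Defs
  imports "HOL-Analysis.Analysis"
begin

definition cond_cdf :: "('x \<Rightarrow> real \<Rightarrow> real) \<Rightarrow> bool" where
  "cond_cdf F \<longleftrightarrow> (\<forall>x. mono (F x)
      \<and> (\<forall>t. continuous (at_right t) (F x))
      \<and> ((F x \<longlongrightarrow> 0) at_bot) \<and> ((F x \<longlongrightarrow> 1) at_top))"

definition proper_loss :: "(('x \<Rightarrow> real \<Rightarrow> real) \<Rightarrow> real) \<Rightarrow> ('x \<Rightarrow> real \<Rightarrow> real) \<Rightarrow> bool" where
  "proper_loss L Ftrue \<longleftrightarrow> cond_cdf Ftrue \<and> (\<forall>F. cond_cdf F \<longrightarrow> L Ftrue \<le> L F)"

definition diff_family :: "'p::real_normed_vector set \<Rightarrow> ('p \<Rightarrow> 'x \<Rightarrow> real \<Rightarrow> real) \<Rightarrow> bool" where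
  "diff_family \<Theta> Fm \<longleftrightarrow> open \<Theta> \<and> (\<forall>\<theta>\<in>\<Theta>. cond_cdf (Fm \<theta>))
      \<and> (\<forall>x t. (\<lambda>\<theta>. Fm \<theta> x t) differentiable_on \<Theta>)"

definition game_stationary ::
  "('a::real_normed_vector \<times> 'b::real_normed_vector \<Rightarrow> real) \<Rightarrow> ('a \<times> 'b \<Rightarrow> real) \<Rightarrow> 'a \<Rightarrow> 'b \<Rightarrow> bool" where
  "game_stationary lF lG a b \<longleftrightarrow>
     ((\<lambda>a'. lF (a', b)) has_derivative (\<lambda>_. 0)) (at a)
   \<and> ((\<lambda>b'. lG (a, b')) has_derivative (\<lambda>_. 0)) (at b)"

end

theory Submission
  imports Defs
begin

lemma partial_min_zero:
  fixes f :: "'a::real_normed_vector \<Rightarrow> real" and g :: "'a \<Rightarrow> 'b::real_normed_vector"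
  assumes d: "f differentiable (at a)" and S: "open S" "a \<in> S"
    and mn: "\<forall>y\<in>S. f a \<le> f y"
  shows "(f has_derivative (\<lambda>_. 0)) (at a)"
proof -
  obtain D where D: "(f has_derivative D) (at a)" using d unfolding differentiable_def by blast
  have ev: "eventually (\<lambda>y. f a \<le> f y) (at a)"
    using eventually_at_topological S mn by blast
  have "D = (\<lambda>h. 0)" by (rule has_derivative_local_min[OF D ev])
  with D show ?thesis by simp
qed

lemma slice1:
  fixes f :: "'a::real_normed_vector \<times> 'b::real_normed_vector \<Rightarrow> real"
  assumes "f differentiable (at (a, b))"
  shows "(\<lambda>a'. f (a', b)) differentiable (at a)"
proof -
  obtain D where D: "(f has_derivative D) (at (a, b))" using assms unfolding differentiable_def by blast
  have p: "((\<lambda>a'. (a', b)) has_derivative (\<lambda>h. (h, 0))) (at a)"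
    by (intro derivative_eq_intros) auto
  have "((\<lambda>a'. f (a', b)) has_derivative (\<lambda>h. D (h, 0))) (at a)"
    using has_derivative_compose[OF p, of f D] D by (simp add: o_def)
  thus ?thesis unfolding differentiable_def by blast
qed

lemma slice2:
  fixes f :: "'a::real_normed_vector \<times> 'b::real_normed_vector \<Rightarrow> real"
  assumes "f differentiable (at (a, b))"
  shows "(\<lambda>b'. f (a, b')) differentiable (at b)"
proof -
  obtain D where D: "(f has_derivative D) (at (a, b))" using assms unfolding differentiable_def by blast
  have p: "((\<lambda>b'. (a, b')) has_derivative (\<lambda>h. (0, h))) (at b)"
    by (intro derivative_eq_intros) auto
  have "((\<lambda>b'. f (a, b')) has_derivative (\<lambda>h. D (0, h))) (at b)"
    using has_derivative_compose[OF p, of f D] D by (simp add: o_def)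
  thus ?thesis unfolding differentiable_def by blast
qed

theorem proposition1:
  fixes \<Theta>T :: "'p::euclidean_space set" and \<Theta>C :: "'q::euclidean_space set"
    and Fm :: "'p \<Rightarrow> 'x \<Rightarrow> real \<Rightarrow> real" and Gm :: "'q \<Rightarrow> 'x \<Rightarrow> real \<Rightarrow> real"
    and Fstar Gstar :: "'x \<Rightarrow> real \<Rightarrow> real"
    and LT LC :: "('x \<Rightarrow> real \<Rightarrow> real) \<Rightarrow> real"
    and LIT LIC :: "('x \<Rightarrow> real \<Rightarrow> real) \<Rightarrow> ('x \<Rightarrow> real \<Rightarrow> real) \<Rightarrow> real"
    and \<theta>Ts :: 'p and \<theta>Cs :: 'q
  assumes famT: "diff_family \<Theta>T Fm" and famC: "diff_family \<Theta>C Gm"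
    and wellT: "\<theta>Ts \<in> \<Theta>T" and wellC: "\<theta>Cs \<in> \<Theta>C"
    and trueF: "Fstar = Fm \<theta>Ts" and trueG: "Gstar = Gm \<theta>Cs"
    and properT: "proper_loss LT Fstar" and properC: "proper_loss LC Gstar"
    and ipcwT: "\<forall>\<theta>T\<in>\<Theta>T. LIT (Fm \<theta>T) Gstar = LT (Fm \<theta>T)"
    and ipcwC: "\<forall>\<theta>C\<in>\<Theta>C. LIC (Gm \<theta>C) Fstar = LC (Gm \<theta>C)"
    and diffF: "(\<lambda>\<theta>. LIT (Fm (fst \<theta>)) (Gm (snd \<theta>))) differentiable (at (\<theta>Ts, \<theta>Cs))"
    and diffG: "(\<lambda>\<theta>. LIC (Gm (snd \<theta>)) (Fm (fst \<theta>))) differentiable (at (\<theta>Ts, \<theta>Cs))"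
  shows "game_stationary (\<lambda>\<theta>. LIT (Fm (fst \<theta>)) (Gm (snd \<theta>)))
                         (\<lambda>\<theta>. LIC (Gm (snd \<theta>)) (Fm (fst \<theta>))) \<theta>Ts \<theta>Cs"
proof -
  have oT: "open \<Theta>T" and cT: "\<forall>\<theta>\<in>\<Theta>T. cond_cdf (Fm \<theta>)" using famT unfolding diff_family_def by auto
  have oC: "open \<Theta>C" and cC: "\<forall>\<theta>\<in>\<Theta>C. cond_cdf (Gm \<theta>)" using famC unfolding diff_family_def by auto
  have 1: "((\<lambda>a'. LIT (Fm a') (Gm \<theta>Cs)) has_derivative (\<lambda>_. 0)) (at \<theta>Ts)"
  proof (rule partial_min_zero[OF _ oT wellT])
    show "(\<lambda>a'. LIT (Fm a') (Gm \<theta>Cs)) differentiable (at \<theta>Ts)"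
      using slice1[OF diffF] by simp
    show "\<forall>y\<in>\<Theta>T. LIT (Fm \<theta>Ts) (Gm \<theta>Cs) \<le> LIT (Fm y) (Gm \<theta>Cs)"
      using ipcwT wellT properT cT unfolding proper_loss_def trueF trueG by auto
  qed
  have 2: "((\<lambda>b'. LIC (Gm b') (Fm \<theta>Ts)) has_derivative (\<lambda>_. 0)) (at \<theta>Cs)"
  proof (rule partial_min_zero[OF _ oC wellC])
    show "(\<lambda>b'. LIC (Gm b') (Fm \<theta>Ts)) differentiable (at \<theta>Cs)"
      using slice2[OF diffG] by simp
    show "\<forall>y\<in>\<Theta>C. LIC (Gm \<theta>Cs) (Fm \<theta>Ts) \<le> LIC (Gm y) (Fm \<theta>Ts)"
      using ipcwC wellC properC cC unfolding proper_loss_def trueF trueG by auto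
  qed
  show ?thesis unfolding game_stationary_def using 1 2 by simp
qed

end
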